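(* Suppose $p=2$, $\rho>0$ and $\mathbb{P}_\circ\in\mathscr{Q}_2$. Then for any $\mu\in\mathscr{M}_2(\mathbb{P}_\circ,\rho)$ and $X\in\mathcal{O}^{d,r}$, $$\psi(\mu,X)=\Big(\big(\mathrm{tr}((I_d-XX^\top)\Sigma_\circ)\big)^{1/2}+\big(\rho^2-\|\mu-\mathbb{E}_{\mathbb{P}_\circ}[\xi_\circ]\|_2^2\big)^{1/2}\Big)^2+\mathrm{tr}\big((I_d-XX^\top)\mu\mu^\top\big).$$
   Context: Let $d,r$ be integers with $1\le r<d$ and $\mathcal{O}^{d,r}=\{X\in\mathbb{R}^{d\times r}: X^\top X=I_r\}$. $\mathscr{Q}_2$ is the set of Borel probability distributions on $\mathbb{R}^d$ with finite second moment, and $\mathbb{W}_2(\mathbb{P}_1,\mathbb{P}_2)=\inf_{\mathbb{Q}\in\mathscr{J}(\mathbb{P}_1,\mathbb{P}_2)}\big(\mathbb{E}_{(\xi_1,\xi_2)\sim\mathbb{Q}}\|\xi_1-\xi_2\|_2^2\big)^{1/2}$, with $\mathscr{J}(\mathbb{P}_1,\mathbb{P}_2)$ the set of couplings of $\mathbb{P}_1,\mathbb{P}_2$. For $X\in\mathcal{O}^{d,r}$ let $\omega_X(\xi)=\mathrm{tr}((I_d-XX^\top)\xi\xi^\top)$. Let $\mathscr{M}_2(\mathbb{P}_\circ,\rho)=\{\mathbb{E}_{\mathbb{P}}[\xi]:\mathbb{P}\in\mathscr{Q}_2,\ \mathbb{W}_2(\mathbb{P},\mathbb{P}_\circ)\le\rho\}$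 and, for $\mu$ in this set, $\psi(\mu,X)=\sup\{\mathbb{E}_{\mathbb{P}}[\omega_X(\xi)]:\mathbb{P}\in\mathscr{Q}_2,\ \mathbb{W}_2(\mathbb{P},\mathbb{P}_\circ)\le\rho,\ \mathbb{E}_{\mathbb{P}}[\xi]=\mu\}$. $\Sigma_\circ=\mathbb{E}_{\mathbb{P}_\circ}[(\xi-\mathbb{E}_{\mathbb{P}_\circ}[\xi])(\xi-\mathbb{E}_{\mathbb{P}_\circ}[\xi])^\top]$ is the covariance matrix under $\mathbb{P}_\circ$. *)

theory Defs
  imports "HOL-Probability.Probability"
begin

definition Q2 :: "(real^'d) measure set" where
  "Q2 = {P. prob_space P \<and> sets P = sets borel \<and> integrable P (\<lambda>x. (norm x)^2)}"

definition couplings :: "(real^'d) measure \<Rightarrow> (real^'d) measure \<Rightarrow> ((real^'d) \<times> (real^'d)) measure set" where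
  "couplings P1 P2 = {Q. prob_space Q \<and> sets Q = sets borel \<and>
       distr Q borel fst = P1 \<and> distr Q borel snd = P2}"

definition W2 :: "(real^'d) measure \<Rightarrow> (real^'d) measure \<Rightarrow> real" where
  "W2 P1 P2 = sqrt (Inf ((\<lambda>Q. \<integral>z. (norm (fst z - snd z))^2 \<partial>Q) ` couplings P1 P2))"

definition mean :: "(real^'d) measure \<Rightarrow> real^'d" where
  "mean P = (\<integral>x. x \<partial>P)"

definition outer :: "real^'d \<Rightarrow> real^'d \<Rightarrow> real^'d^'d" where
  "outer u v = (\<chi> i j. u$i * v$j)"

definition covariance :: "(real^'d) measure \<Rightarrow> real^'d^'d" where
  "covariance P = (\<chi> i j. \<integral>x. (x$i - mean P $ i) * (x$j - mean P $ j) \<partial>P)"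

definition stiefel :: "(real^'r^'d) set" where
  "stiefel = {X. transpose X ** X = mat 1}"

definition omega :: "real^'r^'d \<Rightarrow> real^'d \<Rightarrow> real" where
  "omega X \<xi> = trace ((mat 1 - X ** transpose X) ** outer \<xi> \<xi>)"

definition M2 :: "(real^'d) measure \<Rightarrow> real \<Rightarrow> (real^'d) set" where
  "M2 P0 \<rho> = {mean P | P. P \<in> Q2 \<and> W2 P P0 \<le> \<rho>}"

definition psi :: "(real^'d) measure \<Rightarrow> real \<Rightarrow> real^'d \<Rightarrow> real^'r^'d \<Rightarrow> ereal" where
  "psi P0 \<rho> \<mu> X = (SUP P \<in> {P. P \<in> Q2 \<and> W2 P P0 \<le> \<rho> \<and> mean P = \<mu>}.
      ereal (\<integral>\<xi>. omega X \<xi> \<partial>P))"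

end

theory Submission
  imports Defs
begin


definition PX :: "real^'r^'d \<Rightarrow> real^'d^'d" where "PX X = mat 1 - X ** transpose X"

lemma Pm_apply:
  fixes X :: "real^'r^'d"
  shows "(mat 1 - X ** transpose X) *v v = v - X *v (transpose X *v v)"
  by (simp add: matrix_vector_mult_diff_rdistrib flip: matrix_vector_mul_assoc del: transpose_matrix_vector)

lemma XT_inner:
  fixes X :: "real^'r^'d"
  shows "(X *v w) \<bullet> v = w \<bullet> (transpose X *v v)"
  by (metis dot_lmul_matrix inner_commute transpose_matrix_vector)

context fixes X :: "real^'r^'d" assumes XX: "transpose X ** X = mat 1"
begin
lemma XTX: "transpose X *v (X *v w) = w"
  by (simp add: matrix_vector_mul_assoc XX del: transpose_matrix_vector)

lemma Pm_idem: "(mat 1 - X ** transpose X) *v ((mat 1 - X ** transpose X) *v v) = (mat 1 - X ** transpose X) *v v"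
  by (simp add: Pm_apply XTX matrix_vector_mult_diff_distrib del: transpose_matrix_vector)

lemma Pm_sym: "((mat 1 - X ** transpose X) *v u) \<bullet> v = u \<bullet> ((mat 1 - X ** transpose X) *v v)"
proof -
  have "(X *v (transpose X *v u)) \<bullet> v = u \<bullet> (X *v (transpose X *v v))"
    by (metis XT_inner inner_commute)
  then show ?thesis
    by (simp add: Pm_apply inner_diff_left inner_diff_right del: transpose_matrix_vector)
qed

lemma Pm_sq: "u \<bullet> ((mat 1 - X ** transpose X) *v u) = (norm ((mat 1 - X ** transpose X) *v u))^2"
  by (metis Pm_idem Pm_sym power2_norm_eq_inner)

lemma Pm_norm_le: "norm ((mat 1 - X ** transpose X) *v u) \<le> norm u"
proof -
  let ?P = "mat 1 - X ** transpose X"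
  have "(?P *v u) \<bullet> (u - ?P *v u) = 0"
    by (simp add: inner_diff_right Pm_sym Pm_idem)
  then have "(norm u)^2 = (norm (?P *v u))^2 + (norm (u - ?P *v u))^2"
  proof -
    have o: "orthogonal (?P *v u) (u - ?P *v u)" using \<open>(?P *v u) \<bullet> (u - ?P *v u) = 0\<close> by (simp add: orthogonal_def)
    have "(norm (?P *v u + (u - ?P *v u)))^2 = (norm (?P *v u))^2 + (norm (u - ?P *v u))^2"
      using norm_add_Pythagorean[OF o] .
    then show ?thesis by simp
  qed
  then show ?thesis
    by (metis add.commute le_add_same_cancel2 norm_ge_zero power2_le_imp_le zero_le_power2)
qed

lemma Pm_nonzero: "CARD('r) < CARD('d) \<Longrightarrow> \<exists>v. norm v = 1 \<and> (mat 1 - X ** transpose X) *v v = v"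
proof -
  assume c: "CARD('r) < CARD('d)"
  let ?P = "mat 1 - X ** transpose X"
  have "trace ?P = real CARD('d) - real CARD('r)"
    by (simp add: trace_sub trace_I trace_mul_sym[of X] XX)
  then have "?P \<noteq> 0" using c by (auto simp: trace_def)
  then obtain u where u: "?P *v u \<noteq> 0"
    by (metis matrix_vector_mul_lid matrix_vector_mult_0 matrix_eq)
  define v where "v = (1 / norm (?P *v u)) *\<^sub>R (?P *v u)"
  have "norm v = 1" using u by (simp add: v_def)
  moreover have "?P *v v = v"
    by (simp add: v_def matrix_vector_mult_scaleR Pm_idem)
  ultimately show ?thesis by blast
qed
end

lemma trace_outer:
  fixes A :: "real^'d^'d"
  shows "trace (A ** outer u u) = u \<bullet> (A *v u)"
  by (simp add: trace_def outer_def matrix_matrix_mult_def matrix_vector_mult_def inner_vec_def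
      sum_distrib_left mult_ac)


context fixes X :: "real^'r^'d" assumes XX: "transpose X ** X = mat 1"
begin
lemma PX_idem: "PX X *v (PX X *v v) = PX X *v v" using Pm_idem[OF XX] by (simp add: PX_def)
lemma PX_sym: "(PX X *v u) \<bullet> v = u \<bullet> (PX X *v v)" using Pm_sym[OF XX] by (simp add: PX_def)
lemma PX_sq: "u \<bullet> (PX X *v u) = (norm (PX X *v u))^2" using Pm_sq[OF XX] by (simp add: PX_def)
lemma PX_norm_le: "norm (PX X *v u) \<le> norm u" using Pm_norm_le[OF XX] by (simp add: PX_def)
lemma PX_nonzero: "CARD('r) < CARD('d) \<Longrightarrow> \<exists>v. norm v = 1 \<and> PX X *v v = v" using Pm_nonzero[OF XX] by (simp add: PX_def)
lemma omega_PX: "omega X u = (norm (PX X *v u))^2"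
  using PX_sq[of u] unfolding omega_def trace_outer by (simp add: PX_def)
end



definition L2 :: "'a measure \<Rightarrow> ('a \<Rightarrow> real^'d) \<Rightarrow> bool" where
  "L2 M f \<longleftrightarrow> f \<in> borel_measurable M \<and> integrable M (\<lambda>z. (norm (f z))^2)"

context prob_space begin

lemma L2_meas: "L2 M f \<Longrightarrow> f \<in> borel_measurable M"
  by (simp add: L2_def)

lemma L2_sq: "L2 M f \<Longrightarrow> integrable M (\<lambda>z. (norm (f z))^2)"
  by (simp add: L2_def)

lemma L2_integrable: assumes "L2 M f" shows "integrable M f"
proof (rule Bochner_Integration.integrable_bound[where f="\<lambda>z. 1 + (norm (f z))^2"])
  show "integrable M (\<lambda>z. 1 + (norm (f z))^2)" using assms by (simp add: L2_def)
  show "f \<in> borel_measurable M" using assms by (simp add: L2_def)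
  show "AE x in M. norm (f x) \<le> norm (1 + (norm (f x))\<^sup>2)"
  proof (rule AE_I2)
    fix x
    have "norm (f x) \<le> 1 + (norm (f x))^2"
    proof -
      have h: "2 * norm (f x) \<le> (norm (f x))^2 + 1" using sum_squares_bound[of "norm (f x)" 1] by simp
      then show ?thesis using norm_ge_zero[of "f x"] by linarith
    qed
    then show "norm (f x) \<le> norm (1 + (norm (f x))\<^sup>2 :: real)" by simp
  qed
qed

lemma L2_inner: assumes "L2 M f" "L2 M g" shows "integrable M (\<lambda>z. f z \<bullet> g z)"
proof (rule Bochner_Integration.integrable_bound[where f="\<lambda>z. (norm (f z))^2 + (norm (g z))^2"])
  show "integrable M (\<lambda>z. (norm (f z))^2 + (norm (g z))^2)" using assms by (simp add: L2_def)
  show "(\<lambda>z. f z \<bullet> g z) \<in> borel_measurable M"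
  proof -
    have [measurable]: "f \<in> borel_measurable M" "g \<in> borel_measurable M" using assms by (auto simp: L2_def)
    show ?thesis by measurable
  qed
  show "AE x in M. norm (f x \<bullet> g x) \<le> norm ((norm (f x))^2 + (norm (g x))^2)"
  proof (rule AE_I2)
    fix x
    have "\<bar>f x \<bullet> g x\<bar> \<le> norm (f x) * norm (g x)" by (rule Cauchy_Schwarz_ineq2)
    also have "\<dots> \<le> (norm (f x))^2 + (norm (g x))^2"
      using sum_squares_bound[of "norm (f x)" "norm (g x)"] mult_nonneg_nonneg[OF norm_ge_zero[of "f x"] norm_ge_zero[of "g x"]] by linarith
    finally show "norm (f x \<bullet> g x) \<le> norm ((norm (f x))^2 + (norm (g x))^2)" by simp
  qed
qed

lemma L2_const: "L2 M (\<lambda>z. c)"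
  by (simp add: L2_def)

lemma L2_add: assumes "L2 M f" "L2 M g" shows "L2 M (\<lambda>z. f z + g z)"
proof -
  have "integrable M (\<lambda>z. (norm (f z + g z))^2)"
  proof (rule Bochner_Integration.integrable_bound[where f="\<lambda>z. 2 * (norm (f z))^2 + 2 * (norm (g z))^2"])
    show "integrable M (\<lambda>z. 2 * (norm (f z))^2 + 2 * (norm (g z))^2)" using assms by (simp add: L2_def)
    show "(\<lambda>z. (norm (f z + g z))^2) \<in> borel_measurable M"
    proof -
      have [measurable]: "f \<in> borel_measurable M" "g \<in> borel_measurable M" using assms by (auto simp: L2_def)
      show ?thesis by measurable
    qed
    show "AE x in M. norm ((norm (f x + g x))^2) \<le> norm (2 * (norm (f x))^2 + 2 * (norm (g x))^2)"
    proof (rule AE_I2)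
      fix x
      have "norm (f x + g x) \<le> norm (f x) + norm (g x)" by (rule norm_triangle_ineq)
      then have "(norm (f x + g x))^2 \<le> (norm (f x) + norm (g x))^2"
        by (simp add: power_mono)
      also have "\<dots> \<le> 2 * (norm (f x))^2 + 2 * (norm (g x))^2"
        using sum_squares_bound[of "norm (f x)" "norm (g x)"] by (simp add: power2_sum)
      finally show "norm ((norm (f x + g x))^2) \<le> norm (2 * (norm (f x))^2 + 2 * (norm (g x))^2)" by simp
    qed
  qed
  moreover have "(\<lambda>z. f z + g z) \<in> borel_measurable M"
  proof -
    have [measurable]: "f \<in> borel_measurable M" "g \<in> borel_measurable M" using assms by (auto simp: L2_def)
    show ?thesis by measurable
  qed
  ultimately show ?thesis by (simp add: L2_def)
qed

lemma L2_blin: assumes T: "bounded_linear T" and f: "L2 M f" shows "L2 M (\<lambda>z. T (f z) :: real^'e)"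
proof -
  obtain K where K: "\<And>x. norm (T x) \<le> norm x * K" "K > 0"
    using bounded_linear.pos_bounded[OF T] by blast
  have meas: "(\<lambda>z. T (f z)) \<in> borel_measurable M"
    using borel_measurable_continuous_on[OF linear_continuous_on[OF T] L2_meas[OF f]] .
  have "integrable M (\<lambda>z. (norm (T (f z)))^2)"
  proof (rule Bochner_Integration.integrable_bound[where f="\<lambda>z. K^2 * (norm (f z))^2"])
    show "integrable M (\<lambda>z. K^2 * (norm (f z))^2)" using f by (simp add: L2_def)
    show "(\<lambda>z. (norm (T (f z)))^2) \<in> borel_measurable M" using meas by simp
    show "AE x in M. norm ((norm (T (f x)))^2) \<le> norm (K^2 * (norm (f x))^2)"
    proof (rule AE_I2)
      fix x
      have "(norm (T (f x)))^2 \<le> (norm (f x) * K)^2"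
        using K by (simp add: power_mono)
      then show "norm ((norm (T (f x)))^2) \<le> norm (K^2 * (norm (f x))^2)"
        by (simp add: power_mult_distrib mult_ac)
    qed
  qed
  then show ?thesis using meas by (simp add: L2_def)
qed

lemma L2_scale: "L2 M f \<Longrightarrow> L2 M (\<lambda>z. c *\<^sub>R f z)"
  using L2_blin[OF bounded_linear_scaleR_right] by blast

lemma L2_minus: "L2 M f \<Longrightarrow> L2 M (\<lambda>z. - f z)"
  using L2_scale[of f "-1"] by simp

lemma L2_diff: "L2 M f \<Longrightarrow> L2 M g \<Longrightarrow> L2 M (\<lambda>z. f z - g z)"
  using L2_add[of f "\<lambda>z. - g z"] L2_minus[of g] by simp

lemma L2_mat: "L2 M f \<Longrightarrow> L2 M (\<lambda>z. (A :: real^'d^'e) *v f z)"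
  using L2_blin[OF matrix_vector_mul_bounded_linear] by blast

definition "E f = integral\<^sup>L M f"

lemma var_id: assumes f: "L2 M f"
  shows "(\<integral>z. (norm (f z))^2 \<partial>M) = (norm (\<integral>z. f z \<partial>M))^2 + (\<integral>z. (norm (f z - (\<integral>z. f z \<partial>M)))^2 \<partial>M)"
proof -
  define m where "m = (\<integral>z. f z \<partial>M)"
  have fi: "integrable M f" using L2_integrable[OF f] .
  have eq: "\<And>z. (norm (f z - m))^2 = (norm (f z))^2 - 2 * (f z \<bullet> m) + (norm m)^2"
    by (simp add: power2_norm_eq_inner inner_diff_left inner_diff_right inner_commute)
  have "(\<integral>z. (norm (f z - m))^2 \<partial>M) = (\<integral>z. (norm (f z))^2 \<partial>M) - 2 * (\<integral>z. f z \<bullet> m \<partial>M) + (norm m)^2"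
    unfolding eq using f fi
    by (simp add: L2_def prob_space)
  also have "(\<integral>z. f z \<bullet> m \<partial>M) = m \<bullet> m"
    using fi by (simp add: m_def)
  finally show ?thesis by (simp add: m_def power2_norm_eq_inner)
qed

lemma real_CS_aux:
  fixes A B C :: real
  assumes "\<And>t. 0 \<le> A - 2 * t * C + t^2 * B" "B \<ge> 0"
  shows "C^2 \<le> A * B"
proof (cases "B = 0")
  case True
  then have "C = 0"
    using assms(1)[of "(A + 1) / (2 * C)"] assms(1)[of "- (A + 1) / (2 * C)"]
    by (cases "C = 0") (auto simp: field_simps)
  then show ?thesis using True by simp
next
  case False
  then have "B > 0" using assms by simp
  have "0 \<le> A - 2 * (C / B) * C + (C / B)^2 * B" by (rule assms(1))
  then have "0 \<le> (A - 2 * (C / B) * C + (C / B)^2 * B) * B" using \<open>B > 0\<close> by simp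
  also have "\<dots> = A * B - C^2" using \<open>B > 0\<close> by (simp add: field_simps power2_eq_square)
  finally show ?thesis by simp
qed

lemma CS: assumes f: "L2 M f" and g: "L2 M g"
  shows "(\<integral>z. f z \<bullet> g z \<partial>M) \<le> sqrt (\<integral>z. (norm (f z))^2 \<partial>M) * sqrt (\<integral>z. (norm (g z))^2 \<partial>M)"
proof -
  define A where "A = (\<integral>z. (norm (f z))^2 \<partial>M)"
  define B where "B = (\<integral>z. (norm (g z))^2 \<partial>M)"
  define C where "C = (\<integral>z. f z \<bullet> g z \<partial>M)"
  have B0: "B \<ge> 0" unfolding B_def by (rule integral_nonneg_AE) simp
  have A0: "A \<ge> 0" unfolding A_def by (rule integral_nonneg_AE) simp
  have "0 \<le> A - 2 * t * C + t^2 * B" for t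
  proof -
    have eq: "\<And>z. (norm (f z - t *\<^sub>R g z))^2 = (norm (f z))^2 - 2 * t * (f z \<bullet> g z) + t^2 * (norm (g z))^2"
      unfolding power2_norm_eq_inner
      by (simp add: inner_diff_left inner_diff_right inner_commute power2_eq_square algebra_simps)
    have "0 \<le> (\<integral>z. (norm (f z - t *\<^sub>R g z))^2 \<partial>M)" by (rule integral_nonneg_AE) simp
    also have "\<dots> = A - 2 * t * C + t^2 * B"
      unfolding eq A_def B_def C_def using f g L2_inner[OF f g]
      by (simp add: L2_def)
    finally show ?thesis .
  qed
  then have "C^2 \<le> A * B" using real_CS_aux B0 by blast
  then have "C \<le> sqrt (A * B)"
    by (metis real_le_rsqrt)
  then show ?thesis by (simp add: A_def B_def C_def real_sqrt_mult)
qed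

lemma minkowski: assumes f: "L2 M f" and g: "L2 M g"
  shows "(\<integral>z. (norm (f z + g z))^2 \<partial>M) \<le> (sqrt (\<integral>z. (norm (f z))^2 \<partial>M) + sqrt (\<integral>z. (norm (g z))^2 \<partial>M))^2"
proof -
  define A where "A = (\<integral>z. (norm (f z))^2 \<partial>M)"
  define B where "B = (\<integral>z. (norm (g z))^2 \<partial>M)"
  define C where "C = (\<integral>z. f z \<bullet> g z \<partial>M)"
  have B0: "B \<ge> 0" unfolding B_def by (rule integral_nonneg_AE) simp
  have A0: "A \<ge> 0" unfolding A_def by (rule integral_nonneg_AE) simp
  have eq: "\<And>z. (norm (f z + g z))^2 = (norm (f z))^2 + 2 * (f z \<bullet> g z) + (norm (g z))^2"
    by (simp add: power2_norm_eq_inner inner_add_left inner_add_right inner_commute)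
  have "(\<integral>z. (norm (f z + g z))^2 \<partial>M) = A + 2 * C + B"
    unfolding eq A_def B_def C_def using f g L2_inner[OF f g] by (simp add: L2_def)
  also have "\<dots> \<le> A + 2 * (sqrt A * sqrt B) + B"
    using CS[OF f g] by (simp add: A_def B_def C_def)
  also have "\<dots> = (sqrt A + sqrt B)^2"
    using A0 B0 by (simp add: power2_sum)
  finally show ?thesis by (simp add: A_def B_def)
qed

end



context prob_space begin

lemma core_upper:
  fixes X :: "real^'r^'d" and \<xi> x :: "'a \<Rightarrow> real^'d"
  assumes XX: "transpose X ** X = mat 1" and L\<xi>: "L2 M \<xi>" and Lx: "L2 M x"
  defines "\<mu> \<equiv> \<integral>z. \<xi> z \<partial>M" and "m0 \<equiv> \<integral>z. x z \<partial>M"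
  shows "(norm (\<mu> - m0))^2 \<le> (\<integral>z. (norm (\<xi> z - x z))^2 \<partial>M)"
    and "(\<integral>z. (norm (PX X *v \<xi> z))^2 \<partial>M) \<le> (norm (PX X *v \<mu>))^2 +
         (sqrt (\<integral>z. (norm (PX X *v (x z - m0)))^2 \<partial>M)
          + sqrt ((\<integral>z. (norm (\<xi> z - x z))^2 \<partial>M) - (norm (\<mu> - m0))^2))^2"
proof -
  let ?P = "PX X"
  define a where "a = \<mu> - m0"
  have iw: "(\<integral>z. \<xi> z - x z \<partial>M) = a"
    using L2_integrable[OF L\<xi>] L2_integrable[OF Lx] by (simp add: a_def \<mu>_def m0_def)
  have Lw: "L2 M (\<lambda>z. \<xi> z - x z)" using L2_diff[OF L\<xi> Lx] .
  have V: "(\<integral>z. (norm (\<xi> z - x z))^2 \<partial>M) = (norm a)^2 + (\<integral>z. (norm (\<xi> z - x z - a))^2 \<partial>M)"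
    using var_id[OF Lw] iw by simp
  have nn: "0 \<le> (\<integral>z. (norm (\<xi> z - x z - a))^2 \<partial>M)" by (rule integral_nonneg_AE) simp
  show "(norm (\<mu> - m0))^2 \<le> (\<integral>z. (norm (\<xi> z - x z))^2 \<partial>M)"
    using V nn by (simp add: a_def)
  have LP: "L2 M (\<lambda>z. ?P *v \<xi> z)" using L2_mat[OF L\<xi>] .
  have iP: "(\<integral>z. ?P *v \<xi> z \<partial>M) = ?P *v \<mu>"
    unfolding \<mu>_def using integral_bounded_linear[OF matrix_vector_mul_bounded_linear L2_integrable[OF L\<xi>]] .
  have V2: "(\<integral>z. (norm (?P *v \<xi> z))^2 \<partial>M) = (norm (?P *v \<mu>))^2 + (\<integral>z. (norm (?P *v \<xi> z - ?P *v \<mu>))^2 \<partial>M)"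
    using var_id[OF LP] iP by simp
  have split: "\<And>z. ?P *v \<xi> z - ?P *v \<mu> = ?P *v (x z - m0) + ?P *v (\<xi> z - x z - a)"
    by (simp add: a_def flip: matrix_vector_right_distrib matrix_vector_mult_diff_distrib)
  have L1: "L2 M (\<lambda>z. ?P *v (x z - m0))" using L2_mat[OF L2_diff[OF Lx L2_const]] .
  have L2': "L2 M (\<lambda>z. ?P *v (\<xi> z - x z - a))" using L2_mat[OF L2_diff[OF Lw L2_const]] .
  have "(\<integral>z. (norm (?P *v \<xi> z - ?P *v \<mu>))^2 \<partial>M)
      \<le> (sqrt (\<integral>z. (norm (?P *v (x z - m0)))^2 \<partial>M) + sqrt (\<integral>z. (norm (?P *v (\<xi> z - x z - a)))^2 \<partial>M))^2"
    unfolding split using minkowski[OF L1 L2'] .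
  also have "(\<integral>z. (norm (?P *v (\<xi> z - x z - a)))^2 \<partial>M) \<le> (\<integral>z. (norm (\<xi> z - x z - a))^2 \<partial>M)"
    using L2_sq[OF L2'] L2_sq[OF L2_diff[OF Lw L2_const]]
    by (intro integral_mono) (auto intro!: power_mono PX_norm_le[OF XX])
  then have "sqrt (\<integral>z. (norm (?P *v (\<xi> z - x z - a)))^2 \<partial>M) \<le> sqrt ((\<integral>z. (norm (\<xi> z - x z))^2 \<partial>M) - (norm (\<mu> - m0))^2)"
    using V by (simp add: a_def)
  then have "(sqrt (\<integral>z. (norm (?P *v (x z - m0)))^2 \<partial>M) + sqrt (\<integral>z. (norm (?P *v (\<xi> z - x z - a)))^2 \<partial>M))^2
     \<le> (sqrt (\<integral>z. (norm (?P *v (x z - m0)))^2 \<partial>M) + sqrt ((\<integral>z. (norm (\<xi> z - x z))^2 \<partial>M) - (norm (\<mu> - m0))^2))^2"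
    by (intro power_mono) auto
  finally show "(\<integral>z. (norm (?P *v \<xi> z))^2 \<partial>M) \<le> (norm (?P *v \<mu>))^2 +
         (sqrt (\<integral>z. (norm (?P *v (x z - m0)))^2 \<partial>M)
          + sqrt ((\<integral>z. (norm (\<xi> z - x z))^2 \<partial>M) - (norm (\<mu> - m0))^2))^2"
    using V2 by simp
qed

lemma core_lower:
  fixes X :: "real^'r^'d" and w x :: "'a \<Rightarrow> real^'d"
  assumes XX: "transpose X ** X = mat 1" and Lw: "L2 M w" and Lx: "L2 M x"
    and w0: "(\<integral>z. w z \<partial>M) = 0" and w1: "(\<integral>z. (norm (w z))^2 \<partial>M) = 1"
    and wP: "\<And>z. PX X *v w z = w z"
    and wc: "(\<integral>z. (PX X *v (x z - (\<integral>z. x z \<partial>M))) \<bullet> w z \<partial>M) = sqrt (\<integral>z. (norm (PX X *v (x z - (\<integral>z. x z \<partial>M))))^2 \<partial>M)"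
  shows "(\<integral>z. x z + a + \<delta> *\<^sub>R w z \<partial>M) = (\<integral>z. x z \<partial>M) + a"
    and "(\<integral>z. (norm ((x z + a + \<delta> *\<^sub>R w z) - x z))^2 \<partial>M) = (norm a)^2 + \<delta>^2"
    and "(\<integral>z. (norm (PX X *v (x z + a + \<delta> *\<^sub>R w z)))^2 \<partial>M) =
         (norm (PX X *v ((\<integral>z. x z \<partial>M) + a)))^2 +
         (sqrt (\<integral>z. (norm (PX X *v (x z - (\<integral>z. x z \<partial>M))))^2 \<partial>M) + \<delta>)^2"
proof -
  let ?P = "PX X"
  define m0 where "m0 = (\<integral>z. x z \<partial>M)"
  define c where "c = sqrt (\<integral>z. (norm (?P *v (x z - m0)))^2 \<partial>M)"
  have c0: "c \<ge> 0" unfolding c_def by simp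
  have csq: "c^2 = (\<integral>z. (norm (?P *v (x z - m0)))^2 \<partial>M)"
    unfolding c_def by (rule real_sqrt_pow2) (rule integral_nonneg_AE, simp)
  have iw: "integrable M w" using L2_integrable[OF Lw] .
  have ix: "integrable M x" using L2_integrable[OF Lx] .
  show "(\<integral>z. x z + a + \<delta> *\<^sub>R w z \<partial>M) = (\<integral>z. x z \<partial>M) + a"
    using iw ix w0 by (simp add: prob_space)
  have eq1: "\<And>z. (norm ((x z + a + \<delta> *\<^sub>R w z) - x z))^2 = (norm a)^2 + 2 * \<delta> * (w z \<bullet> a) + \<delta>^2 * (norm (w z))^2"
    unfolding power2_norm_eq_inner
    by (simp add: inner_add_left inner_add_right inner_commute power2_eq_square algebra_simps)
  show "(\<integral>z. (norm ((x z + a + \<delta> *\<^sub>R w z) - x z))^2 \<partial>M) = (norm a)^2 + \<delta>^2"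
    unfolding eq1 using iw w0 w1 L2_sq[OF Lw] by (simp add: prob_space)
  define \<xi> where "\<xi> z = x z + a + \<delta> *\<^sub>R w z" for z
  have L\<xi>: "L2 M \<xi>" unfolding \<xi>_def using L2_add[OF L2_add[OF Lx L2_const] L2_scale[OF Lw]] .
  have i\<xi>: "(\<integral>z. \<xi> z \<partial>M) = m0 + a" using iw ix w0 by (simp add: prob_space \<xi>_def m0_def)
  have LP: "L2 M (\<lambda>z. ?P *v \<xi> z)" using L2_mat[OF L\<xi>] .
  have iP: "(\<integral>z. ?P *v \<xi> z \<partial>M) = ?P *v (m0 + a)"
    using integral_bounded_linear[OF matrix_vector_mul_bounded_linear L2_integrable[OF L\<xi>]] i\<xi> by simp
  have V2: "(\<integral>z. (norm (?P *v \<xi> z))^2 \<partial>M) = (norm (?P *v (m0 + a)))^2 + (\<integral>z. (norm (?P *v \<xi> z - ?P *v (m0 + a)))^2 \<partial>M)"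
    using var_id[OF LP] iP by simp
  have split: "\<And>z. ?P *v \<xi> z - ?P *v (m0 + a) = ?P *v (x z - m0) + \<delta> *\<^sub>R w z"
  proof -
    fix z
    have "\<xi> z - (m0 + a) = (x z - m0) + \<delta> *\<^sub>R w z" by (simp add: \<xi>_def)
    then have "?P *v \<xi> z - ?P *v (m0 + a) = ?P *v (x z - m0) + \<delta> *\<^sub>R (?P *v w z)"
      by (metis matrix_vector_mult_diff_distrib matrix_vector_right_distrib matrix_vector_mult_scaleR)
    then show "?P *v \<xi> z - ?P *v (m0 + a) = ?P *v (x z - m0) + \<delta> *\<^sub>R w z" using wP by simp
  qed
  have eq2: "\<And>z. (norm (?P *v (x z - m0) + \<delta> *\<^sub>R w z))^2 = (norm (?P *v (x z - m0)))^2 + 2 * \<delta> * ((?P *v (x z - m0)) \<bullet> w z) + \<delta>^2 * (norm (w z))^2"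
    unfolding power2_norm_eq_inner
    by (simp add: inner_add_left inner_add_right inner_commute power2_eq_square algebra_simps)
  have L1: "L2 M (\<lambda>z. ?P *v (x z - m0))" using L2_mat[OF L2_diff[OF Lx L2_const]] .
  have "(\<integral>z. (norm (?P *v \<xi> z - ?P *v (m0 + a)))^2 \<partial>M) = c^2 + 2 * \<delta> * c + \<delta>^2"
    unfolding split eq2 using L2_sq[OF L1] L2_inner[OF L1 Lw] L2_sq[OF Lw] w1 wc csq
    by (simp add: m0_def c_def)
  also have "\<dots> = (c + \<delta>)^2" by (simp add: power2_sum)
  finally show "(\<integral>z. (norm (PX X *v (x z + a + \<delta> *\<^sub>R w z)))^2 \<partial>M) =
         (norm (PX X *v ((\<integral>z. x z \<partial>M) + a)))^2 +
         (sqrt (\<integral>z. (norm (PX X *v (x z - (\<integral>z. x z \<partial>M))))^2 \<partial>M) + \<delta>)^2"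
    using V2 by (simp add: \<xi>_def m0_def c_def)
qed

end



lemma Q2_D:
  assumes "P \<in> Q2"
  shows "prob_space P" "sets P = sets borel" "space P = UNIV" "L2 P (\<lambda>x. x)"
proof -
  show "prob_space P" "sets P = sets borel" using assms by (auto simp: Q2_def)
  then show "space P = UNIV" by (metis sets_eq_imp_space_eq space_borel)
  show "L2 P (\<lambda>x. x)" using assms \<open>sets P = sets borel\<close>
    by (auto simp: Q2_def L2_def measurable_cong_sets[OF \<open>sets P = sets borel\<close> refl])
qed

lemma vec_nth_meas[measurable]: "(\<lambda>x::real^'d. x $ i) \<in> borel_measurable borel"
  by (rule borel_measurable_continuous_onI[OF linear_continuous_on[OF bounded_linear_vec_nth]])

lemma trace_cov:
  fixes A :: "real^'d^'d"
  assumes P: "P \<in> Q2"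
  shows "trace (A ** covariance P) = (\<integral>x. (x - mean P) \<bullet> (A *v (x - mean P)) \<partial>P)"
proof -
  define m where "m = mean P"
  interpret prob_space P using Q2_D[OF P] by simp
  have sP: "sets P = sets borel" using Q2_D[OF P] by simp
  have Lx: "L2 P (\<lambda>x. x - m)" using L2_diff[OF Q2_D(4)[OF P] L2_const] .
  have int: "integrable P (\<lambda>x. (x$k - m$k) * (x$i - m$i))" for k i
  proof (rule Bochner_Integration.integrable_bound[where f="\<lambda>x. (norm (x - m))^2"])
    show "integrable P (\<lambda>x. (norm (x - m))^2)" using L2_sq[OF Lx] .
    show "(\<lambda>x. (x$k - m$k) * (x$i - m$i)) \<in> borel_measurable P"
      unfolding measurable_cong_sets[OF sP refl] by measurable
    show "AE x in P. norm ((x$k - m$k) * (x$i - m$i)) \<le> norm ((norm (x - m))^2)"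
    proof (rule AE_I2)
      fix x
      have "\<bar>(x - m)$k\<bar> \<le> norm (x - m)" "\<bar>(x - m)$i\<bar> \<le> norm (x - m)" by (rule component_le_norm_cart)+
      then have "\<bar>(x - m)$k\<bar> * \<bar>(x - m)$i\<bar> \<le> norm (x - m) * norm (x - m)"
        by (intro mult_mono) auto
      then show "norm ((x$k - m$k) * (x$i - m$i)) \<le> norm ((norm (x - m))^2)"
        by (simp add: abs_mult power2_eq_square)
    qed
  qed
  have "(\<integral>x. (x - m) \<bullet> (A *v (x - m)) \<partial>P) = (\<integral>x. (\<Sum>i\<in>UNIV. \<Sum>k\<in>UNIV. A$i$k * ((x$k - m$k) * (x$i - m$i))) \<partial>P)"
    by (simp add: inner_vec_def matrix_vector_mult_def sum_distrib_left mult_ac)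
  also have "\<dots> = (\<Sum>i\<in>UNIV. \<Sum>k\<in>UNIV. A$i$k * (\<integral>x. (x$k - m$k) * (x$i - m$i) \<partial>P))"
    using int by (simp add: integral_sum)
  also have "\<dots> = trace (A ** covariance P)"
    by (simp add: trace_def matrix_matrix_mult_def covariance_def m_def)
  finally show ?thesis by (simp add: m_def)
qed

lemma trace_cov_PX:
  fixes X :: "real^'r^'d"
  assumes XX: "transpose X ** X = mat 1" and P: "P \<in> Q2"
  shows "trace ((mat 1 - X ** transpose X) ** covariance P) = (\<integral>x. (norm (PX X *v (x - mean P)))^2 \<partial>P)"
  using trace_cov[OF P, of "PX X"] by (simp add: PX_def[symmetric] PX_sq[OF XX])

lemma coupling_D:
  fixes P1 P2 :: "(real^'d) measure"
  assumes Q: "Q \<in> couplings P1 P2" and P1: "P1 \<in> Q2" and P2: "P2 \<in> Q2"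
  shows "prob_space Q" "fst \<in> measurable Q borel" "snd \<in> measurable Q borel"
    "\<And>g :: real^'d \<Rightarrow> 'c::{banach,second_countable_topology}. g \<in> borel_measurable borel \<Longrightarrow> integral\<^sup>L P1 g = (\<integral>z. g (fst z) \<partial>Q)"
    "\<And>g :: real^'d \<Rightarrow> 'e::{banach,second_countable_topology}. g \<in> borel_measurable borel \<Longrightarrow> integral\<^sup>L P2 g = (\<integral>z. g (snd z) \<partial>Q)"
    "L2 Q fst" "L2 Q snd"
proof -
  have bp: "(borel \<Otimes>\<^sub>M borel) = (borel :: ((real^'d) \<times> (real^'d)) measure)" by (rule borel_prod)
  have sQ: "sets Q = sets (borel \<Otimes>\<^sub>M borel)" using Q unfolding bp by (simp add: couplings_def)
  show "prob_space Q" using Q by (simp add: couplings_def)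
  show mf: "fst \<in> measurable Q borel" unfolding measurable_cong_sets[OF sQ refl] by simp
  show ms: "snd \<in> measurable Q borel" unfolding measurable_cong_sets[OF sQ refl] by simp
  have d1: "distr Q borel fst = P1" using Q unfolding couplings_def by blast
  have d2: "distr Q borel snd = P2" using Q unfolding couplings_def by blast
  show i1: "integral\<^sup>L P1 g = (\<integral>z. g (fst z) \<partial>Q)" if g: "g \<in> borel_measurable borel" for g :: "real^'d \<Rightarrow> 'c::{banach,second_countable_topology}"
    using integral_distr[OF mf g] unfolding d1 .
  show i2: "integral\<^sup>L P2 g = (\<integral>z. g (snd z) \<partial>Q)" if g: "g \<in> borel_measurable borel" for g :: "real^'d \<Rightarrow> 'e::{banach,second_countable_topology}"
    using integral_distr[OF ms g] unfolding d2 .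
  have "integrable P1 (\<lambda>x. (norm x)^2)" using P1 by (simp add: Q2_def)
  then have "integrable Q (\<lambda>z. (norm (fst z))^2)"
    using integrable_distr_eq[OF mf, of "\<lambda>x. (norm x)^2"] d1 by simp
  then show "L2 Q fst" using mf by (simp add: L2_def)
  have "integrable P2 (\<lambda>x. (norm x)^2)" using P2 by (simp add: Q2_def)
  then have "integrable Q (\<lambda>z. (norm (snd z))^2)"
    using integrable_distr_eq[OF ms, of "\<lambda>x. (norm x)^2"] d2 by simp
  then show "L2 Q snd" using ms by (simp add: L2_def)
qed

lemma distr_pair_snd':
  assumes N: "prob_space N" and M: "sigma_finite_measure M"
  shows "distr (N \<Otimes>\<^sub>M M) M snd = M"
proof (intro measure_eqI)
  fix A assume A: "A \<in> sets (distr (N \<Otimes>\<^sub>M M) M snd)"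
  then have A': "A \<in> sets M" by simp
  have "snd -` A \<inter> space (N \<Otimes>\<^sub>M M) = space N \<times> A"
    using sets.sets_into_space[OF A'] by (auto simp: space_pair_measure)
  then have "emeasure (distr (N \<Otimes>\<^sub>M M) M snd) A = emeasure (N \<Otimes>\<^sub>M M) (space N \<times> A)"
    using A' by (simp add: emeasure_distr)
  also have "\<dots> = emeasure N (space N) * emeasure M A"
    using sigma_finite_measure.emeasure_pair_measure_Times[OF M, of "space N" N A] A' by simp
  also have "\<dots> = emeasure M A" using prob_space.emeasure_space_1[OF N] by simp
  finally show "emeasure (distr (N \<Otimes>\<^sub>M M) M snd) A = emeasure M A" .
qed simp

lemma couplings_nonempty:
  fixes P1 P2 :: "(real^'d) measure"
  assumes P1: "P1 \<in> Q2" and P2: "P2 \<in> Q2"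
  shows "couplings P1 P2 \<noteq> {}"
proof -
  interpret p1: prob_space P1 using Q2_D[OF P1] by simp
  interpret p2: prob_space P2 using Q2_D[OF P2] by simp
  interpret pp: pair_prob_space P1 P2 by unfold_locales
  have s1: "sets P1 = sets borel" and s2: "sets P2 = sets borel" using Q2_D P1 P2 by auto
  have s0: "sets (P1 \<Otimes>\<^sub>M P2) = sets (borel \<Otimes>\<^sub>M borel)"
    using s1 s2 by (intro sets_pair_measure_cong)
  have bp: "(borel \<Otimes>\<^sub>M borel) = (borel :: ((real^'d) \<times> (real^'d)) measure)" by (rule borel_prod)
  have s: "sets (P1 \<Otimes>\<^sub>M P2) = sets borel" using s0 bp by metis
  have "distr (P1 \<Otimes>\<^sub>M P2) borel fst = distr (P1 \<Otimes>\<^sub>M P2) P1 fst"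
    using s1 by (intro distr_cong) auto
  also have "\<dots> = P1" using p2.distr_pair_fst .
  finally have d1: "distr (P1 \<Otimes>\<^sub>M P2) borel fst = P1" .
  have "distr (P1 \<Otimes>\<^sub>M P2) borel snd = distr (P1 \<Otimes>\<^sub>M P2) P2 snd"
    using s2 by (intro distr_cong) auto
  also have "\<dots> = P2" by (rule distr_pair_snd'[OF p1.prob_space_axioms p2.sigma_finite_measure_axioms])
  finally have d2: "distr (P1 \<Otimes>\<^sub>M P2) borel snd = P2" .
  have "P1 \<Otimes>\<^sub>M P2 \<in> couplings P1 P2"
    unfolding couplings_def using s d1 d2 pp.prob_space_axioms by simp
  then show ?thesis by blast
qed




lemma eps_le: fixes x y :: real assumes "\<And>e. e > 0 \<Longrightarrow> x < y + e" shows "x \<le> y"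
proof (rule ccontr)
  assume "\<not> x \<le> y"
  then show False using assms[of "x - y"] by simp
qed

lemma eps_sqrt:
  fixes V K c D :: real
  assumes c: "c \<ge> 0" and D: "D \<ge> 0" and h: "\<And>e. e > 0 \<Longrightarrow> V \<le> K + (c + sqrt (D + e))^2"
  shows "V \<le> K + (c + sqrt D)^2"
proof (rule ccontr)
  assume nt: "\<not> ?thesis"
  define t where "t = c + sqrt D"
  have t0: "t \<ge> 0" using c D by (simp add: t_def)
  define g where "g = V - K - t^2"
  have g0: "g > 0" using nt by (simp add: g_def t_def)
  define e where "e = min 1 (g / (2 * t + 2))"
  have e0: "e > 0" using g0 t0 by (simp add: e_def)
  have e1: "e \<le> 1" by (simp add: e_def)
  have "e \<le> g / (2 * t + 2)" by (simp add: e_def)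
  then have e2: "e * (2 * t + 2) \<le> g" using t0 by (simp add: pos_le_divide_eq)
  have "sqrt (D + e^2) \<le> sqrt D + sqrt (e^2)"
    using sqrt_add_le_add_sqrt[of D "e^2"] D by simp
  then have "sqrt (D + e^2) \<le> sqrt D + e" using e0 by simp
  then have "c + sqrt (D + e^2) \<le> t + e" by (simp add: t_def)
  moreover have "0 \<le> c + sqrt (D + e^2)" using c D by simp
  ultimately have "(c + sqrt (D + e^2))^2 \<le> (t + e)^2" by (intro power_mono) auto
  also have "\<dots> = t^2 + e * (2 * t + e)" by (simp add: power2_eq_square algebra_simps)
  also have "\<dots> \<le> t^2 + e * (2 * t + 1)" using e0 e1 by (intro add_left_mono mult_left_mono) auto
  also have "\<dots> < t^2 + g" using e2 e0 by (simp add: algebra_simps)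
  finally have "(c + sqrt (D + e^2))^2 < t^2 + g" .
  moreover have "V \<le> K + (c + sqrt (D + e^2))^2" using h e0 by simp
  ultimately show False by (simp add: g_def)
qed

lemma mat_meas[measurable]: "(\<lambda>x. (A :: real^'d^'e) *v x) \<in> borel_measurable borel"
  by (rule borel_measurable_continuous_onI[OF linear_continuous_on[OF matrix_vector_mul_bounded_linear]])

lemma upper_bound:
  fixes P P0 :: "(real^'d) measure" and X :: "real^'r^'d"
  assumes XX: "transpose X ** X = mat 1" and P: "P \<in> Q2" and P0: "P0 \<in> Q2"
    and W: "W2 P P0 \<le> \<rho>" and \<rho>: "\<rho> \<ge> 0"
  shows "(norm (mean P - mean P0))^2 \<le> \<rho>^2"
    and "(\<integral>\<xi>. omega X \<xi> \<partial>P) \<le> (norm (PX X *v mean P))^2 +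
          (sqrt (\<integral>x. (norm (PX X *v (x - mean P0)))^2 \<partial>P0) + sqrt (\<rho>^2 - (norm (mean P - mean P0))^2))^2"
proof -
  define S where "S = (\<lambda>Q. \<integral>z. (norm (fst z - snd z))^2 \<partial>Q) ` couplings P P0"
  define c2 where "c2 = (\<integral>x. (norm (PX X *v (x - mean P0)))^2 \<partial>P0)"
  define a where "a = mean P - mean P0"
  define K where "K = (norm (PX X *v mean P))^2"
  define V where "V = (\<integral>\<xi>. omega X \<xi> \<partial>P)"
  have Sne: "S \<noteq> {}" using couplings_nonempty[OF P P0] by (simp add: S_def)
  have S0: "\<And>s. s \<in> S \<Longrightarrow> 0 \<le> s" unfolding S_def by (auto intro!: integral_nonneg_AE)
  have bdd: "bdd_below S" using S0 by (auto simp: bdd_below_def)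
  have I0: "0 \<le> Inf S" using S0 Sne by (intro cInf_greatest) auto
  have sq: "sqrt (Inf S) \<le> \<rho>" using W by (simp add: W2_def S_def)
  have "Inf S = (sqrt (Inf S))^2" using I0 by simp
  also have "\<dots> \<le> \<rho>^2" using sq I0 by (intro power_mono) auto
  finally have IS: "Inf S \<le> \<rho>^2" .
  have c0: "c2 \<ge> 0" unfolding c2_def by (intro integral_nonneg_AE) auto
  have main: "(norm a)^2 < \<rho>^2 + e \<and> V \<le> K + (sqrt c2 + sqrt (\<rho>^2 + e - (norm a)^2))^2" if e: "e > 0" for e
  proof -
    have "Inf S < \<rho>^2 + e" using IS e by simp
    then obtain s where "s \<in> S" "s < \<rho>^2 + e" using cInf_lessD[OF Sne] by blast
    then obtain Q where Q: "Q \<in> couplings P P0" and sQ: "(\<integral>z. (norm (fst z - snd z))^2 \<partial>Q) < \<rho>^2 + e"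
      by (auto simp: S_def)
    interpret Qp: prob_space Q using coupling_D(1)[OF Q P P0] .
    note CD = coupling_D[OF Q P P0]
    have m1: "(\<integral>z. fst z \<partial>Q) = mean P" using CD(4)[of "\<lambda>x. x"] by (simp add: mean_def)
    have m2: "(\<integral>z. snd z \<partial>Q) = mean P0" using CD(5)[of "\<lambda>x. x"] by (simp add: mean_def)
    have cc: "(\<integral>z. (norm (PX X *v (snd z - mean P0)))^2 \<partial>Q) = c2"
      using CD(5)[of "\<lambda>x. (norm (PX X *v (x - mean P0)))^2"] by (simp add: c2_def)
    have vv: "(\<integral>z. (norm (PX X *v fst z))^2 \<partial>Q) = V"
      using CD(4)[of "\<lambda>x. (norm (PX X *v x))^2"] by (simp add: V_def omega_PX[OF XX])
    have u1: "(norm a)^2 \<le> (\<integral>z. (norm (fst z - snd z))^2 \<partial>Q)"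
      using Qp.core_upper(1)[OF XX CD(6) CD(7)] m1 m2 by (simp add: a_def)
    have u2: "V \<le> K + (sqrt c2 + sqrt ((\<integral>z. (norm (fst z - snd z))^2 \<partial>Q) - (norm a)^2))^2"
      using Qp.core_upper(2)[OF XX CD(6) CD(7)] m1 m2 cc vv by (simp add: a_def K_def)
    also have "\<dots> \<le> K + (sqrt c2 + sqrt (\<rho>^2 + e - (norm a)^2))^2"
      using sQ u1 c0 by (intro add_left_mono power_mono add_left_mono real_sqrt_le_mono) auto
    finally show ?thesis using u1 sQ by simp
  qed
  show a2: "(norm (mean P - mean P0))^2 \<le> \<rho>^2"
    using main by (intro eps_le) (auto simp: a_def)
  have "V \<le> K + (sqrt c2 + sqrt (\<rho>^2 - (norm a)^2))^2"
  proof (rule eps_sqrt)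
    show "0 \<le> sqrt c2" using c0 by simp
    show "0 \<le> \<rho>^2 - (norm a)^2" using a2 by (simp add: a_def)
    fix e :: real assume "e > 0"
    then show "V \<le> K + (sqrt c2 + sqrt (\<rho>^2 - (norm a)^2 + e))^2"
      using main[of e] by (simp add: algebra_simps)
  qed
  then show "(\<integral>\<xi>. omega X \<xi> \<partial>P) \<le> (norm (PX X *v mean P))^2 +
          (sqrt (\<integral>x. (norm (PX X *v (x - mean P0)))^2 \<partial>P0) + sqrt (\<rho>^2 - (norm (mean P - mean P0))^2))^2"
    by (simp add: V_def K_def c2_def a_def)
qed




lemma lower_bound:
  fixes P0 :: "(real^'d) measure" and X :: "real^'r^'d" and a :: "real^'d" and \<delta> :: real
  assumes XX: "transpose X ** X = mat 1" and card: "CARD('r) < CARD('d)" and P0: "P0 \<in> Q2"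
  shows "\<exists>P. P \<in> Q2 \<and> W2 P P0 \<le> sqrt ((norm a)^2 + \<delta>^2) \<and> mean P = mean P0 + a \<and>
     (\<integral>\<xi>. omega X \<xi> \<partial>P) = (norm (PX X *v (mean P0 + a)))^2 +
         (sqrt (\<integral>x. (norm (PX X *v (x - mean P0)))^2 \<partial>P0) + \<delta>)^2"
proof -
  define C where "C = measure_pmf (bernoulli_pmf (1/2))"
  define M where "M = P0 \<Otimes>\<^sub>M C"
  interpret p0: prob_space P0 using Q2_D[OF P0] by simp
  interpret c: prob_space C unfolding C_def by (rule prob_space_measure_pmf)
  interpret pp: pair_prob_space P0 C by unfold_locales
  interpret m: prob_space M unfolding M_def by (rule pp.prob_space_axioms)
  have sP0: "sets P0 = sets borel" using Q2_D[OF P0] by simp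
  have mfst: "fst \<in> measurable M P0" unfolding M_def by simp
  have mfstb: "fst \<in> borel_measurable M" using mfst by (simp add: measurable_cong_sets[OF refl sP0])
  have msnd: "snd \<in> measurable M C" unfolding M_def by simp
  have dfst: "distr M P0 fst = P0" unfolding M_def by (rule c.distr_pair_fst)
  have dsnd: "distr M C snd = C" unfolding M_def
    by (rule distr_pair_snd'[OF p0.prob_space_axioms c.sigma_finite_measure_axioms])
  have ifst: "(\<integral>z. g (fst z) \<partial>M) = integral\<^sup>L P0 g" if g: "g \<in> borel_measurable borel" for g :: "real^'d \<Rightarrow> real"
  proof -
    have "g \<in> borel_measurable P0" using g by (simp add: measurable_cong_sets[OF sP0 refl])
    then show ?thesis using integral_distr[OF mfst, of g] dfst by simp
  qed
  have ifstv: "(\<integral>z. fst z \<partial>M) = mean P0"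
  proof -
    have "(\<lambda>x. x) \<in> borel_measurable P0" by (simp add: measurable_cong_sets[OF sP0 refl])
    then show ?thesis using integral_distr[OF mfst, of "\<lambda>x. x"] dfst by (simp add: mean_def)
  qed
  have isnd: "(\<integral>z. g (snd z) \<partial>M) = integral\<^sup>L C g" for g :: "bool \<Rightarrow> real"
    using integral_distr[OF msnd, of g] dsnd by (simp add: C_def)
  have Lx: "L2 M fst"
  proof -
    have "integrable P0 (\<lambda>x. (norm x)^2)" using P0 by (simp add: Q2_def)
    moreover have "(\<lambda>x. (norm x)^2) \<in> borel_measurable P0"
      by (simp add: measurable_cong_sets[OF sP0 refl])
    ultimately have "integrable M (\<lambda>z. (norm (fst z))^2)"
      using integrable_distr_eq[OF mfst, of "\<lambda>x. (norm x)^2"] dfst by simp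
    then show ?thesis using mfstb by (simp add: L2_def)
  qed
  define m0 where "m0 = mean P0"
  define c2 where "c2 = (\<integral>x. (norm (PX X *v (x - m0)))^2 \<partial>P0)"
  have c0: "c2 \<ge> 0" unfolding c2_def by (intro integral_nonneg_AE) auto
  have cM: "(\<integral>z. (norm (PX X *v (fst z - m0)))^2 \<partial>M) = c2"
    unfolding c2_def by (rule ifst) measurable
  have L1: "L2 M (\<lambda>z. PX X *v (fst z - m0))" using m.L2_mat[OF m.L2_diff[OF Lx m.L2_const]] .
  have i1: "(\<integral>z. PX X *v (fst z - m0) \<partial>M) = 0"
  proof -
    have "(\<integral>z. PX X *v (fst z - m0) \<partial>M) = PX X *v (\<integral>z. fst z - m0 \<partial>M)"
      using integral_bounded_linear[OF matrix_vector_mul_bounded_linear m.L2_integrable[OF m.L2_diff[OF Lx m.L2_const]]] .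
    also have "(\<integral>z. fst z - m0 \<partial>M) = 0"
      using m.L2_integrable[OF Lx] ifstv by (simp add: m.prob_space m0_def)
    finally show ?thesis by simp
  qed
  obtain w :: "(real^'d) \<times> bool \<Rightarrow> real^'d" where Lw: "L2 M w" and w0: "(\<integral>z. w z \<partial>M) = 0" and w1: "(\<integral>z. (norm (w z))^2 \<partial>M) = 1"
    and wP: "\<And>z. PX X *v w z = w z"
    and wc: "(\<integral>z. (PX X *v (fst z - m0)) \<bullet> w z \<partial>M) = sqrt c2"
  proof (cases "c2 > 0")
    case True
    define w where "w (z :: (real^'d) \<times> bool) = (1 / sqrt c2) *\<^sub>R (PX X *v (fst z - m0))" for z
    show ?thesis
    proof (rule that[of w])
      show "L2 M w" unfolding w_def using m.L2_scale[OF L1] .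
      show "(\<integral>z. w z \<partial>M) = 0" unfolding w_def using i1 by simp
      have "(\<integral>z. (norm (w z))^2 \<partial>M) = (1 / c2) * (\<integral>z. (norm (PX X *v (fst z - m0)))^2 \<partial>M)"
        unfolding w_def using True by (simp add: power_mult_distrib power_divide)
      then show "(\<integral>z. (norm (w z))^2 \<partial>M) = 1" using cM True by simp
      show "\<And>z. PX X *v w z = w z" unfolding w_def by (simp add: matrix_vector_mult_scaleR PX_idem[OF XX])
      have "(\<integral>z. (PX X *v (fst z - m0)) \<bullet> w z \<partial>M) = (1 / sqrt c2) * (\<integral>z. (norm (PX X *v (fst z - m0)))^2 \<partial>M)"
        unfolding w_def by (simp add: power2_norm_eq_inner)
      also have "\<dots> = sqrt c2" using cM True by (simp add: field_simps real_sqrt_pow2[symmetric] power2_eq_square)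
      finally show "(\<integral>z. (PX X *v (fst z - m0)) \<bullet> w z \<partial>M) = sqrt c2" .
    qed
  next
    case False
    then have cz: "c2 = 0" using c0 by simp
    obtain v where v1: "norm v = 1" and vP: "PX X *v v = v" using PX_nonzero[OF XX card] by blast
    define s where "s b = (if b then 1 else - 1 :: real)" for b
    define w where "w (z :: (real^'d) \<times> bool) = s (snd z) *\<^sub>R v" for z
    have s2: "\<And>b. (s b)^2 = 1" by (simp add: s_def)
    have mw: "w \<in> borel_measurable M"
    proof -
      have "(\<lambda>b. s b *\<^sub>R v) \<in> borel_measurable C" by (simp add: C_def)
      then show ?thesis unfolding w_def using measurable_comp[OF msnd] by (simp add: comp_def)
    qed
    have nw: "\<And>z. (norm (w z))^2 = 1" by (simp add: w_def s2 v1 power_mult_distrib)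
    have Lw: "L2 M w" using mw nw by (simp add: L2_def)
    show ?thesis
    proof (rule that[of w])
      show "L2 M w" by (rule Lw)
      have "(\<integral>z. s (snd z) \<partial>M) = 0" using isnd[of s] by (simp add: C_def s_def)
      moreover have "integrable M (\<lambda>z. s (snd z))"
      proof (rule m.integrable_const_bound[where B=1])
        show "AE x in M. norm (s (snd x)) \<le> 1" by (simp add: s_def)
        have "s \<in> borel_measurable C" by (simp add: C_def)
        then show "(\<lambda>z. s (snd z)) \<in> borel_measurable M" using measurable_comp[OF msnd] by (simp add: comp_def)
      qed
      ultimately show "(\<integral>z. w z \<partial>M) = 0" unfolding w_def by simp
      show "(\<integral>z. (norm (w z))^2 \<partial>M) = 1" using nw by (simp add: m.prob_space)
      show "\<And>z. PX X *v w z = w z" unfolding w_def by (simp add: matrix_vector_mult_scaleR vP)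
      have le1: "(\<integral>z. (PX X *v (fst z - m0)) \<bullet> w z \<partial>M) \<le> 0"
        using m.CS[OF L1 Lw] cM cz by simp
      have "(\<integral>z. (- (PX X *v (fst z - m0))) \<bullet> w z \<partial>M) \<le> 0"
        using m.CS[OF m.L2_minus[OF L1] Lw] cM cz by simp
      then have le2: "0 \<le> (\<integral>z. (PX X *v (fst z - m0)) \<bullet> w z \<partial>M)" by simp
      show "(\<integral>z. (PX X *v (fst z - m0)) \<bullet> w z \<partial>M) = sqrt c2" using le1 le2 cz by simp
    qed
  qed
  define \<xi> where "\<xi> z = fst z + a + \<delta> *\<^sub>R w z" for z
  have L\<xi>: "L2 M \<xi>" unfolding \<xi>_def using m.L2_add[OF m.L2_add[OF Lx m.L2_const] m.L2_scale[OF Lw]] .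
  have wc': "(\<integral>z. (PX X *v (fst z - (\<integral>z. fst z \<partial>M))) \<bullet> w z \<partial>M) = sqrt (\<integral>z. (norm (PX X *v (fst z - (\<integral>z. fst z \<partial>M))))^2 \<partial>M)"
    using wc cM ifstv by (simp add: m0_def)
  note CL = m.core_lower[OF XX Lw Lx w0 w1 wP wc', of a \<delta>]
  have mxi: "\<xi> \<in> borel_measurable M" using L\<xi> by (simp add: L2_def)
  define P where "P = distr M borel \<xi>"
  define Q where "Q = distr M borel (\<lambda>z. (\<xi> z, fst z))"
  have bp: "(borel \<Otimes>\<^sub>M borel) = (borel :: ((real^'d) \<times> (real^'d)) measure)" by (rule borel_prod)
  have mpair: "(\<lambda>z. (\<xi> z, fst z)) \<in> measurable M borel"
  proof -
    have "(\<lambda>z. (\<xi> z, fst z)) \<in> measurable M (borel \<Otimes>\<^sub>M borel)"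
      using mxi mfstb by (rule measurable_Pair)
    then show ?thesis using bp by metis
  qed
  have PQ2: "P \<in> Q2"
  proof -
    have "integrable M (\<lambda>z. (norm (\<xi> z))^2)" using L\<xi> by (simp add: L2_def)
    then have "integrable P (\<lambda>x. (norm x)^2)"
      unfolding P_def using integrable_distr_eq[OF mxi, of "\<lambda>x. (norm x)^2"] by simp
    then show ?thesis unfolding Q2_def P_def using m.prob_space_distr[OF mxi] by simp
  qed
  have meanP: "mean P = mean P0 + a"
    unfolding mean_def P_def using integral_distr[OF mxi, of "\<lambda>x. x"] CL(1) ifstv
    by (simp add: \<xi>_def mean_def)
  have omP: "(\<integral>\<xi>. omega X \<xi> \<partial>P) = (norm (PX X *v (mean P0 + a)))^2 + (sqrt c2 + \<delta>)^2"
  proof -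
    have "(\<integral>x. omega X x \<partial>P) = (\<integral>z. (norm (PX X *v \<xi> z))^2 \<partial>M)"
      unfolding P_def using integral_distr[OF mxi, of "\<lambda>x. (norm (PX X *v x))^2"]
      by (simp add: omega_PX[OF XX])
    then show ?thesis using CL(3) ifstv cM by (simp add: \<xi>_def m0_def)
  qed
  have mf2: "fst \<in> measurable (borel :: ((real^'d) \<times> (real^'d)) measure) borel"
    using measurable_fst[of "borel :: (real^'d) measure" "borel :: (real^'d) measure"] unfolding bp .
  have ms2: "snd \<in> measurable (borel :: ((real^'d) \<times> (real^'d)) measure) borel"
    using measurable_snd[of "borel :: (real^'d) measure" "borel :: (real^'d) measure"] unfolding bp .
  have QC: "Q \<in> couplings P P0"
  proof -
    have "distr Q borel fst = P"
      unfolding Q_def P_def using distr_distr[OF mf2 mpair] by (simp add: comp_def)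
    moreover have "distr Q borel snd = P0"
    proof -
      have "distr Q borel snd = distr M borel fst"
        unfolding Q_def using distr_distr[OF ms2 mpair] by (simp add: comp_def)
      also have "\<dots> = distr M P0 fst" using sP0 by (intro distr_cong) auto
      finally show ?thesis using dfst by simp
    qed
    ultimately show ?thesis unfolding couplings_def Q_def using m.prob_space_distr[OF mpair] by simp
  qed
  have costQ: "(\<integral>z. (norm (fst z - snd z))^2 \<partial>Q) = (norm a)^2 + \<delta>^2"
  proof -
    have g: "(\<lambda>p. (norm (fst p - snd p))^2) \<in> borel_measurable (borel :: ((real^'d) \<times> (real^'d)) measure)"
      by (intro borel_measurable_continuous_onI continuous_intros)
    have "(\<integral>z. (norm (fst z - snd z))^2 \<partial>Q) = (\<integral>z. (norm (\<xi> z - fst z))^2 \<partial>M)"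
      unfolding Q_def using integral_distr[OF mpair g] by simp
    then show ?thesis using CL(2) by (simp add: \<xi>_def)
  qed
  have WW: "W2 P P0 \<le> sqrt ((norm a)^2 + \<delta>^2)"
  proof -
    define S where "S = (\<lambda>Q. \<integral>z. (norm (fst z - snd z))^2 \<partial>Q) ` couplings P P0"
    have "bdd_below S" unfolding S_def by (auto simp: bdd_below_def intro!: exI[of _ 0] integral_nonneg_AE)
    moreover have "(norm a)^2 + \<delta>^2 \<in> S" unfolding S_def by (rule image_eqI[where f="\<lambda>Q. \<integral>z. (norm (fst z - snd z))^2 \<partial>Q", OF costQ[symmetric] QC])
    ultimately have "Inf S \<le> (norm a)^2 + \<delta>^2" by (intro cInf_lower)
    then show ?thesis unfolding W2_def S_def by (rule real_sqrt_le_mono)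
  qed
  have omP': "(\<integral>\<xi>. omega X \<xi> \<partial>P) = (norm (PX X *v (mean P0 + a)))^2 +
         (sqrt (\<integral>x. (norm (PX X *v (x - mean P0)))^2 \<partial>P0) + \<delta>)^2"
    using omP unfolding c2_def m0_def .
  show ?thesis using PQ2 meanP omP' WW by blast
qed




theorem mainTheorem4:
  fixes P0 :: "(real^'d) measure" and \<rho> :: real and \<mu> :: "real^'d" and X :: "real^'r^'d"
  assumes "1 \<le> CARD('r)" and "CARD('r) < CARD('d)"
    and "\<rho> > 0" and "P0 \<in> Q2"
    and "\<mu> \<in> M2 P0 \<rho>" and "X \<in> stiefel"
  shows "psi P0 \<rho> \<mu> X =
    ereal ((sqrt (trace ((mat 1 - X ** transpose X) ** covariance P0))
            + sqrt (\<rho>^2 - (norm (\<mu> - mean P0))^2))^2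
           + trace ((mat 1 - X ** transpose X) ** outer \<mu> \<mu>))"
proof -
  have XX: "transpose X ** X = mat 1" using assms(6) by (simp add: stiefel_def)
  have P0: "P0 \<in> Q2" by (rule assms(4))
  define c2 where "c2 = (\<integral>x. (norm (PX X *v (x - mean P0)))^2 \<partial>P0)"
  have tr1: "trace ((mat 1 - X ** transpose X) ** covariance P0) = c2"
    unfolding c2_def by (rule trace_cov_PX[OF XX P0])
  have tr2: "trace ((mat 1 - X ** transpose X) ** outer \<mu> \<mu>) = (norm (PX X *v \<mu>))^2"
    using omega_PX[OF XX, of \<mu>] by (simp add: omega_def)
  obtain P1 where P1: "P1 \<in> Q2" "W2 P1 P0 \<le> \<rho>" "mean P1 = \<mu>"
    using assms(5) by (auto simp: M2_def)
  have a2: "(norm (\<mu> - mean P0))^2 \<le> \<rho>^2"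
    using upper_bound(1)[OF XX P1(1) P0 P1(2)] assms(3) P1(3) by simp
  define \<delta> where "\<delta> = sqrt (\<rho>^2 - (norm (\<mu> - mean P0))^2)"
  define T where "T = (sqrt c2 + \<delta>)^2 + (norm (PX X *v \<mu>))^2"
  have goal: "psi P0 \<rho> \<mu> X = ereal T"
  proof (rule antisym)
    show "psi P0 \<rho> \<mu> X \<le> ereal T"
      unfolding psi_def
    proof (rule SUP_least)
      fix P assume "P \<in> {P. P \<in> Q2 \<and> W2 P P0 \<le> \<rho> \<and> mean P = \<mu>}"
      then have P: "P \<in> Q2" "W2 P P0 \<le> \<rho>" "mean P = \<mu>" by auto
      have "(\<integral>\<xi>. omega X \<xi> \<partial>P) \<le> T"
        using upper_bound(2)[OF XX P(1) P0 P(2)] assms(3) P(3) by (simp add: T_def c2_def \<delta>_def)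
      then show "ereal (\<integral>\<xi>. omega X \<xi> \<partial>P) \<le> ereal T" by simp
    qed
    obtain P where P: "P \<in> Q2" "W2 P P0 \<le> sqrt ((norm (\<mu> - mean P0))^2 + \<delta>^2)"
      "mean P = mean P0 + (\<mu> - mean P0)"
      "(\<integral>\<xi>. omega X \<xi> \<partial>P) = (norm (PX X *v (mean P0 + (\<mu> - mean P0))))^2 + (sqrt c2 + \<delta>)^2"
      using lower_bound[OF XX assms(2) P0, of "\<mu> - mean P0" \<delta>] unfolding c2_def by blast
    have "(norm (\<mu> - mean P0))^2 + \<delta>^2 = \<rho>^2" using a2 by (simp add: \<delta>_def)
    then have "W2 P P0 \<le> \<rho>" using P(2) assms(3) by simp
    moreover have "mean P = \<mu>" using P(3) by simp
    ultimately have "P \<in> {P. P \<in> Q2 \<and> W2 P P0 \<le> \<rho> \<and> mean P = \<mu>}" using P(1) by simp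
    then have "ereal (\<integral>\<xi>. omega X \<xi> \<partial>P) \<le> psi P0 \<rho> \<mu> X"
      unfolding psi_def by (rule SUP_upper)
    moreover have "(\<integral>\<xi>. omega X \<xi> \<partial>P) = T" using P(4) by (simp add: T_def)
    ultimately show "ereal T \<le> psi P0 \<rho> \<mu> X" by simp
  qed
  show ?thesis using goal tr1 tr2 by (simp add: T_def \<delta>_def)
qed



end
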